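(* For every team $R$ of three robots, the Equivalent Oscillation problem $EqOsc$ is solvable by $R$ in the model $\mathcal{FCOM}$ under the fully synchronous scheduler with limited visibility, i.e. $EqOsc\in Task(\mathcal{FCOM}, FSYNCH, \mathcal{L.V.}; R)$.
   Context: Robots are anonymous, identical, autonomous points in the Euclidean plane. Each has its own local coordinate system, with no common chirality. Robots operate in Look-Compute-Move cycles: an instantaneous snapshot of visible robot positions and lights, a computation of a destination and light color, then a move. In $\mathcal{FCOM}$, each robot has a light with colors from a finite set, set at the end of Compute and visible only to other robots; a robot does not see its own light and is otherwise oblivious. Under the fully synchronous scheduler, all robots are activated in every round. Under limited visibility, a robot sees only robots (and their lights) within a fixed distance $V_r$ (same for all robots) of its current position, and the initial visibility graph (robots adjacent iff they see each other) is connected. Problem Equivalent Oscillation ($EqOsc$): three robots $r_1,r_2,r_3$ are initially at collinear points $B,A,C$ respectively, with $AB=AC=d$. Let $B',C'$ be the points on this line (on segments $AB$, $AC$) with $AB'=AC'=\frac{2d}{3}$. The robots $r_1$ and $r_3$ must always be equidistant from $r_2$ (which is at $A$). They must also oscillate: if at some round $t$, $r_1,r_3$ are at $B,C$, then at some round $t'>t$ they are at $B',C'$; and if at round $t'$ they are at $B',C'$, then at some round $t''>t'$ they are at $B,C$. *)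

theory Defs
  imports Complex_Main "HOL-Library.Multiset"
begin

text \<open>The Euclidean plane is modelled by the complex numbers. Robots are indexed
  0, 1, 2 (r1, r2, r3). Colours are natural numbers; an algorithm uses a finite
  set of them.\<close>

definition robots :: "nat set" where
  "robots = {0, 1, 2}"

text \<open>A local coordinate system: a similarity of the plane, given by a nonzero
  complex factor a (rotation and unit of length), an origin o, and a flag telling
  whether the handedness (chirality) is reversed.\<close>

type_synonym frame = "complex \<times> complex \<times> bool"

definition frame_ok :: "frame \<Rightarrow> bool" where
  "frame_ok F \<longleftrightarrow> fst F \<noteq> 0"

definition to_local :: "frame \<Rightarrow> complex \<Rightarrow> complex" where
  "to_local F z = (case F of (a, org, b) \<Rightarrow> a * (if b then cnj (z - org) else z - org))"

definition from_local :: "frame \<Rightarrow> complex \<Rightarrow> complex" where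
  "from_local F w = (case F of (a, org, b) \<Rightarrow> org + (if b then cnj (w / a) else w / a))"

text \<open>An algorithm (the same for all robots): from the snapshot, i.e. the robot's own
  position in its local frame and the multiset of (local position, light) of the
  other robots it sees, compute a destination (local frame) and a new light colour.
  The robot does not see its own light.\<close>

type_synonym algorithm = "complex \<Rightarrow> (complex \<times> nat) multiset \<Rightarrow> complex \<times> nat"

type_synonym config = "(nat \<Rightarrow> complex) \<times> (nat \<Rightarrow> nat)"

definition visible :: "real \<Rightarrow> (nat \<Rightarrow> complex) \<Rightarrow> nat \<Rightarrow> nat set" where
  "visible V P i = {j \<in> robots - {i}. cmod (P j - P i) \<le> V}"

definition snapshot ::
  "(nat \<Rightarrow> frame) \<Rightarrow> real \<Rightarrow> config \<Rightarrow> nat \<Rightarrow> complex \<times> (complex \<times> nat) multiset" where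
  "snapshot F V c i = (case c of (P, L) \<Rightarrow>
     (to_local (F i) (P i),
      image_mset (\<lambda>j. (to_local (F i) (P j), L j)) (mset_set (visible V P i))))"

definition fsync_step :: "(nat \<Rightarrow> frame) \<Rightarrow> real \<Rightarrow> algorithm \<Rightarrow> config \<Rightarrow> config" where
  "fsync_step F V alg c =
     ((\<lambda>i. from_local (F i) (fst (case_prod alg (snapshot F V c i)))),
      (\<lambda>i. snd (case_prod alg (snapshot F V c i))))"

primrec exec :: "(nat \<Rightarrow> frame) \<Rightarrow> real \<Rightarrow> algorithm \<Rightarrow> config \<Rightarrow> nat \<Rightarrow> config" where
  "exec F V alg c0 0 = c0"
| "exec F V alg c0 (Suc t) = fsync_step F V alg (exec F V alg c0 t)"

definition vis_connected :: "real \<Rightarrow> (nat \<Rightarrow> complex) \<Rightarrow> bool" where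
  "vis_connected V P \<longleftrightarrow>
     (\<forall>i\<in>robots. \<forall>j\<in>robots.
        (\<lambda>x y. x \<in> robots \<and> y \<in> robots \<and> cmod (P x - P y) \<le> V)\<^sup>*\<^sup>* i j)"

text \<open>Initial positions: r1 at B, r2 at A, r3 at C where C is the reflection of B
  in A (so B, A, C are collinear with AB = AC = d = |B - A| > 0).\<close>

definition init_pos :: "complex \<Rightarrow> complex \<Rightarrow> nat \<Rightarrow> complex" where
  "init_pos A B i = (if i = 0 then B else if i = 1 then A else 2 * A - B)"

definition EqOsc :: "complex \<Rightarrow> complex \<Rightarrow> (nat \<Rightarrow> nat \<Rightarrow> complex) \<Rightarrow> bool" where
  "EqOsc A B P \<longleftrightarrow>
     (let C = 2 * A - B;
          B' = A + (2/3) * (B - A);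
          C' = A + (2/3) * (C - A)
      in (\<forall>t. P t 1 = A \<and> cmod (P t 0 - P t 1) = cmod (P t 2 - P t 1)) \<and>
         (\<forall>t. P t 0 = B \<and> P t 2 = C \<longrightarrow> (\<exists>t'>t. P t' 0 = B' \<and> P t' 2 = C')) \<and>
         (\<forall>t. P t 0 = B' \<and> P t 2 = C' \<longrightarrow> (\<exists>t''>t. P t'' 0 = B \<and> P t'' 2 = C)))"

text \<open>Solvability of EqOsc in FCOM, FSYNCH, limited visibility, by teams of three
  robots: one algorithm with finitely many colours and a fixed initial colour works
  for every team, i.e. every choice of local frames, visibility range, and initial
  placement, whenever the initial visibility graph is connected.\<close>

definition EqOsc_solvable_FCOM_FSYNCH_LV :: bool where
  "EqOsc_solvable_FCOM_FSYNCH_LV \<longleftrightarrow>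
     (\<exists>(Cols :: nat set) c0 (alg :: algorithm).
        finite Cols \<and> c0 \<in> Cols \<and> (\<forall>p M. snd (alg p M) \<in> Cols) \<and>
        (\<forall>(A :: complex) (B :: complex) (V :: real) (F :: nat \<Rightarrow> frame).
           B \<noteq> A \<and> V > 0 \<and> (\<forall>i\<in>robots. frame_ok (F i)) \<and> vis_connected V (init_pos A B) \<longrightarrow>
           EqOsc A B (\<lambda>t. fst (exec F V alg (init_pos A B, \<lambda>_. c0) t))))"

end

theory Submission
  imports Defs
begin

definition pickc :: "(complex \<times> nat) multiset \<Rightarrow> nat \<Rightarrow> complex" where
  "pickc M c = fst (SOME x. x \<in># M \<and> snd x = c)"

definition myalg :: algorithm where
  "myalg p M =
    (if size M = 2 \<and> 2 * p = sum_mset (image_mset fst M)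
     then (p, if (\<exists>x\<in>#M. snd x = 4) then 2 else 1)
     else if (\<exists>x\<in>#M. snd x = 1) then (pickc M 1 + (2/3) * (p - pickc M 1), 3)
     else if (\<exists>x\<in>#M. snd x = 2) then (pickc M 2 + (3/2) * (p - pickc M 2), 4)
     else (p, 4))"

lemma pickc_single: "pickc {#(q, m)#} m = q"
proof -
  have "(\<lambda>x. x \<in># {#(q, m)#} \<and> snd x = m) = (\<lambda>x. x = (q, m))" by auto
  then show ?thesis unfolding pickc_def by simp
qed

lemma pickc_two: "e \<noteq> m \<Longrightarrow> pickc {#(q, m), (r, e)#} m = q"
  unfolding pickc_def
proof -
  assume "e \<noteq> m"
  then have "(\<lambda>x. x \<in># {#(q, m), (r, e)#} \<and> snd x = m) = (\<lambda>x. x = (q, m))" by auto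
  then show "fst (SOME x. x \<in># {#(q, m), (r, e)#} \<and> snd x = m) = q" by simp
qed

lemma alg_middle:
  assumes "2 * p = q + r"
  shows "myalg p {#(q, e), (r, e)#} = (p, if e = 4 then 2 else 1)"
  using assms unfolding myalg_def by auto

lemma alg_end1:
  shows "myalg p {#(q, m)#} = (if m = 1 then (q + (2/3) * (p - q), 3)
      else if m = 2 then (q + (3/2) * (p - q), 4) else (p, 4))"
  unfolding myalg_def by (auto simp: pickc_single)

lemma alg_end2:
  assumes "2 * p \<noteq> q + r" "e \<noteq> 1" "e \<noteq> 2"
  shows "myalg p {#(q, m), (r, e)#} = (if m = 1 then (q + (2/3) * (p - q), 3)
      else if m = 2 then (q + (3/2) * (p - q), 4) else (p, 4))"
  using assms unfolding myalg_def by (auto simp: pickc_two)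

definition pos :: "complex \<Rightarrow> complex \<Rightarrow> real \<Rightarrow> nat \<Rightarrow> complex" where
  "pos A B s i = A + of_real s * (if i = 0 then B - A else if i = 2 then A - B else 0)"

lemma to_local_affine:
  assumes "cnj c = c"
  shows "to_local F (q + c * (p - q)) = to_local F q + c * (to_local F p - to_local F q)"
proof (cases F)
  case (fields a o b)
  then show ?thesis using assms
    by (cases b) (simp_all add: to_local_def algebra_simps)
qed

lemma from_to: "frame_ok F \<Longrightarrow> from_local F (to_local F z) = z"
  by (cases F) (auto simp: frame_ok_def from_local_def to_local_def)

lemma to_local_mid:
  assumes "frame_ok F"
  shows "(2 * to_local F z = to_local F x + to_local F y) \<longleftrightarrow> (2 * z = x + y)"
proof (cases F)
  case (fields a o b)
  then have a: "a \<noteq> 0" using assms by (simp add: frame_ok_def)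
  show ?thesis
  proof (cases b)
    case True
    have "(2 * to_local F z = to_local F x + to_local F y) \<longleftrightarrow>
          a * cnj (2 * z - x - y) = 0"
      using fields True by (auto simp: to_local_def algebra_simps)
    also have "\<dots> \<longleftrightarrow> 2 * z = x + y" using a
      by (metis complex_cnj_zero_iff diff_add_cancel diff_diff_eq eq_iff_diff_eq_0 mult_eq_0_iff)
    finally show ?thesis .
  next
    case False
    have "(2 * to_local F z = to_local F x + to_local F y) \<longleftrightarrow>
          a * (2 * z - x - y) = 0"
      using fields False by (auto simp: to_local_def algebra_simps)
    also have "\<dots> \<longleftrightarrow> 2 * z = x + y" using a
      by (metis diff_add_cancel diff_diff_eq eq_iff_diff_eq_0 mult_eq_0_iff)
    finally show ?thesis .
  qed
qed

lemma vis1: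
  assumes "0 < s" "s * cmod (B - A) \<le> V"
  shows "visible V (pos A B s) 1 = {0, 2}"
proof -
  have "cmod (of_real s * (B - A)) \<le> V" "cmod (of_real s * (A - B)) \<le> V"
    using assms by (simp_all add: norm_mult norm_minus_commute)
  then show ?thesis unfolding visible_def robots_def pos_def by auto
qed

lemma vis0:
  assumes "0 < s" "s * cmod (B - A) \<le> V"
  shows "visible V (pos A B s) 0 = (if 2 * s * cmod (B - A) \<le> V then {1, 2} else {1})"
proof -
  have "cmod (A - (A + of_real s * (B - A))) \<le> V"
    using assms by (simp add: norm_mult norm_minus_commute)
  moreover have "cmod (A + of_real s * (A - B) - (A + of_real s * (B - A))) = 2 * s * cmod (B - A)"
  proof -
    have e: "A + of_real s * (A - B) - (A + of_real s * (B - A)) = - (2 * of_real s) * (B - A)"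
      by (simp add: algebra_simps)
    show ?thesis using assms by (subst e) (simp add: norm_mult)
  qed
  ultimately show ?thesis unfolding visible_def robots_def pos_def by auto
qed

lemma vis2:
  assumes "0 < s" "s * cmod (B - A) \<le> V"
  shows "visible V (pos A B s) 2 = (if 2 * s * cmod (B - A) \<le> V then {0, 1} else {1})"
proof -
  have "cmod (A - (A + of_real s * (A - B))) \<le> V"
    using assms by (simp add: norm_mult norm_minus_commute)
  moreover have "cmod (A + of_real s * (B - A) - (A + of_real s * (A - B))) = 2 * s * cmod (B - A)"
  proof -
    have e: "A + of_real s * (B - A) - (A + of_real s * (A - B)) = (2 * of_real s) * (B - A)"
      by (simp add: algebra_simps)
    show ?thesis using assms by (subst e) (simp add: norm_mult)
  qed
  ultimately show ?thesis unfolding visible_def robots_def pos_def by auto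
qed

lemma res_mid:
  assumes "frame_ok (F 1)" "0 < s" "s * cmod (B - A) \<le> V" "L 0 = e" "L 2 = e"
  shows "case_prod myalg (snapshot F V (pos A B s, L) 1) = (to_local (F 1) A, if e = 4 then 2 else 1)"
proof -
  have M: "snapshot F V (pos A B s, L) 1 = (to_local (F 1) (pos A B s 1),
     {#(to_local (F 1) (pos A B s 0), e), (to_local (F 1) (pos A B s 2), e)#})"
  proof -
    have v: "visible V (pos A B s) (Suc 0) = {0, 2}" using vis1[OF assms(2,3)] by simp
    show ?thesis using assms unfolding snapshot_def by (simp add: v)
  qed
  have "2 * pos A B s 1 = pos A B s 0 + pos A B s 2" by (simp add: pos_def algebra_simps)
  then have "2 * to_local (F 1) (pos A B s 1) = to_local (F 1) (pos A B s 0) + to_local (F 1) (pos A B s 2)"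
    using to_local_mid[OF assms(1)] by blast
  then show ?thesis unfolding M by (simp add: alg_middle pos_def)
qed

lemma conv:
  assumes "cnj c = c"
  shows "to_local G P + c * (to_local G Q - to_local G P) = to_local G (P + c * (Q - P))"
  using to_local_affine[OF assms] by simp

lemma res_end:
  assumes "frame_ok (F i)" "0 < s" "s * cmod (B - A) \<le> V" "B \<noteq> A" "L 1 = m" "L k = e"
    "e \<noteq> 1" "e \<noteq> 2" "(i = 0 \<and> k = 2) \<or> (i = 2 \<and> k = 0)"
  shows "case_prod myalg (snapshot F V (pos A B s, L) i) =
    (if m = 1 then (to_local (F i) (pos A B (2/3*s) i), 3)
     else if m = 2 then (to_local (F i) (pos A B (3/2*s) i), 4)
     else (to_local (F i) (pos A B s i), 4))"
proof -
  define G where "G = F i"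
  have p1: "pos A B s 1 = A" by (simp add: pos_def)
  have c23: "pos A B (2/3*s) i = A + 2/3 * (pos A B s i - A)"
    using assms(9) by (auto simp: pos_def)
  have c32: "pos A B (3/2*s) i = A + 3/2 * (pos A B s i - A)"
    using assms(9) by (auto simp: pos_def)
  have e23: "to_local G (pos A B s 1) + 2/3 * (to_local G (pos A B s i) - to_local G (pos A B s 1))
     = to_local G (pos A B (2/3*s) i)"
    unfolding p1 c23 by (rule conv) simp
  have e32: "to_local G (pos A B s 1) + 3/2 * (to_local G (pos A B s i) - to_local G (pos A B s 1))
     = to_local G (pos A B (3/2*s) i)"
    unfolding p1 c32 by (rule conv) simp
  have nm: "\<not> 2 * pos A B s i = pos A B s 1 + pos A B s k"
    using assms(9) assms(2) assms(4) by (auto simp: pos_def algebra_simps)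
  have nm': "\<not> 2 * to_local G (pos A B s i) = to_local G (pos A B s 1) + to_local G (pos A B s k)"
    using to_local_mid[OF assms(1)[folded G_def]] nm by blast
  have R: "myalg (to_local G (pos A B s i)) M = (if m = 1 then (to_local G (pos A B (2/3*s) i), 3)
     else if m = 2 then (to_local G (pos A B (3/2*s) i), 4)
     else (to_local G (pos A B s i), 4))"
    if "M = {#(to_local G (pos A B s 1), m)#} \<or>
        M = {#(to_local G (pos A B s 1), m), (to_local G (pos A B s k), e)#}" for M
    using that
  proof
    assume "M = {#(to_local G (pos A B s 1), m)#}"
    then show ?thesis by (simp only: alg_end1 e23 e32)
  next
    assume "M = {#(to_local G (pos A B s 1), m), (to_local G (pos A B s k), e)#}"
    then show ?thesis using nm' assms(7,8) by (simp only: alg_end2 e23 e32 simp_thms)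
  qed
  have "snd (snapshot F V (pos A B s, L) i) = {#(to_local G (pos A B s 1), m)#} \<or>
        snd (snapshot F V (pos A B s, L) i) = {#(to_local G (pos A B s 1), m), (to_local G (pos A B s k), e)#}"
    using assms(9)
  proof
    assume "i = 0 \<and> k = 2"
    then show ?thesis using assms unfolding snapshot_def G_def by (simp add: vis0[OF assms(2,3)])
  next
    assume "i = 2 \<and> k = 0"
    then show ?thesis using assms unfolding snapshot_def G_def by (simp add: vis2[OF assms(2,3)] add_mset_commute)
  qed
  moreover have "fst (snapshot F V (pos A B s, L) i) = to_local G (pos A B s i)"
    unfolding snapshot_def G_def by simp
  ultimately show ?thesis using R unfolding G_def
    by (cases "snapshot F V (pos A B s, L) i") (metis fst_conv snd_conv case_prod_conv)
qed

lemma snap_agree: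
  assumes "i \<in> robots" "\<forall>j\<in>robots. fst c j = P j \<and> snd c j = L j"
  shows "snapshot F V c i = snapshot F V (P, L) i"
proof (cases c)
  case (Pair P' L')
  have v: "visible V P' i = visible V P i"
    using assms Pair unfolding visible_def by auto
  have fin: "finite (visible V P i)" unfolding visible_def robots_def by auto
  have sub: "visible V P i \<subseteq> robots" unfolding visible_def by auto
  have "image_mset (\<lambda>j. (to_local (F i) (P' j), L' j)) (mset_set (visible V P i)) =
        image_mset (\<lambda>j. (to_local (F i) (P j), L j)) (mset_set (visible V P i))"
    by (rule image_mset_cong) (use assms Pair fin sub in auto)
  then show ?thesis using assms Pair v unfolding snapshot_def by auto
qed

lemma step:
  assumes ok: "\<forall>i\<in>robots. frame_ok (F i)" and BA: "B \<noteq> A" and dV: "cmod (B - A) \<le> V"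
    and s: "0 < s" "s \<le> 1"
    and ag: "\<forall>j\<in>robots. fst c j = pos A B s j \<and> snd c j = L j"
    and L: "L 0 = e" "L 2 = e" "L 1 = m" "e \<noteq> 1" "e \<noteq> 2"
  shows "\<forall>i\<in>robots. fst (fsync_step F V myalg c) i =
            pos A B (if m = 1 then 2/3*s else if m = 2 then 3/2*s else s) i \<and>
          snd (fsync_step F V myalg c) i =
            (if i = 1 then (if e = 4 then 2 else 1) else (if m = 1 then 3 else 4))"
proof
  fix i assume i: "i \<in> robots"
  have sV: "s * cmod (B - A) \<le> V"
    using s dV by (meson mult_left_le_one_le norm_ge_zero order_trans less_imp_le)
  have sn: "snapshot F V c i = snapshot F V (pos A B s, L) i" by (rule snap_agree[OF i ag])
  have fo: "frame_ok (F i)" using ok i by blast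
  have fs: "fst (fsync_step F V myalg c) i = from_local (F i) (fst (case_prod myalg (snapshot F V (pos A B s, L) i)))"
    "snd (fsync_step F V myalg c) i = snd (case_prod myalg (snapshot F V (pos A B s, L) i))"
    unfolding fsync_step_def by (simp_all only: sn fst_conv snd_conv)
  have "i = 0 \<or> i = 1 \<or> i = 2" using i unfolding robots_def by auto
  then show "fst (fsync_step F V myalg c) i =
            pos A B (if m = 1 then 2/3*s else if m = 2 then 3/2*s else s) i \<and>
          snd (fsync_step F V myalg c) i =
            (if i = 1 then (if e = 4 then 2 else 1) else (if m = 1 then 3 else 4))"
  proof (elim disjE)
    assume i0: "i = 0"
    have "case_prod myalg (snapshot F V (pos A B s, L) i) =
    (if m = 1 then (to_local (F i) (pos A B (2/3*s) i), 3)
     else if m = 2 then (to_local (F i) (pos A B (3/2*s) i), 4)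
     else (to_local (F i) (pos A B s i), 4))"
      by (rule res_end[where k = 2]) (use fo s sV BA L i0 in auto)
    then show ?thesis unfolding fs using fo i0 by (simp add: from_to)
  next
    assume i2: "i = 2"
    have "case_prod myalg (snapshot F V (pos A B s, L) i) =
    (if m = 1 then (to_local (F i) (pos A B (2/3*s) i), 3)
     else if m = 2 then (to_local (F i) (pos A B (3/2*s) i), 4)
     else (to_local (F i) (pos A B s i), 4))"
      by (rule res_end[where k = 0]) (use fo s sV BA L i2 in auto)
    then show ?thesis unfolding fs using fo i2 by (simp add: from_to)
  next
    assume i1: "i = 1"
    have "case_prod myalg (snapshot F V (pos A B s, L) i) = (to_local (F i) A, if e = 4 then 2 else 1)"
      using res_mid[of F s B A V L e] fo s sV L i1 by simp
    then show ?thesis unfolding fs using fo i1 by (simp add: from_to pos_def)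
  qed
qed

definition S :: "nat \<Rightarrow> real" where
  "S t = (if t = 0 then 1 else if odd t then 1 else 2/3)"

definition Lt :: "nat \<Rightarrow> nat \<Rightarrow> nat" where
  "Lt t i = (if t = 0 then 0 else if odd t then (if i = 1 then 1 else 4) else (if i = 1 then 2 else 3))"

lemma inv:
  assumes ok: "\<forall>i\<in>robots. frame_ok (F i)" and BA: "B \<noteq> A" and dV: "cmod (B - A) \<le> V"
  shows "\<forall>j\<in>robots. fst (exec F V myalg (init_pos A B, \<lambda>_. 0) t) j = pos A B (S t) j \<and>
           snd (exec F V myalg (init_pos A B, \<lambda>_. 0) t) j = Lt t j"
proof (induction t)
  case 0
  then show ?case by (auto simp: robots_def init_pos_def pos_def S_def Lt_def)
next
  case (Suc t)
  have st: "0 < S t" "S t \<le> 1" by (auto simp: S_def)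
  have H: "\<forall>i\<in>robots. fst (fsync_step F V myalg (exec F V myalg (init_pos A B, \<lambda>_. 0) t)) i =
            pos A B (if Lt t 1 = 1 then 2/3*S t else if Lt t 1 = 2 then 3/2*S t else S t) i \<and>
          snd (fsync_step F V myalg (exec F V myalg (init_pos A B, \<lambda>_. 0) t)) i =
            (if i = 1 then (if Lt t 0 = 4 then 2 else 1) else (if Lt t 1 = 1 then 3 else 4))"
    by (rule step[OF ok BA dV st Suc.IH]) (auto simp: Lt_def)
  have e1: "(if Lt t 1 = 1 then 2/3*S t else if Lt t 1 = 2 then 3/2*S t else S t) = S (Suc t)"
    by (auto simp: Lt_def S_def)
  have e2: "\<And>i. i \<in> robots \<Longrightarrow> (if i = 1 then (if Lt t 0 = 4 then 2 else 1) else (if Lt t 1 = 1 then 3 else 4)) = Lt (Suc t) i"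
    by (auto simp: Lt_def robots_def)
  show ?case using H e1 e2 by simp
qed

lemma dist_le:
  assumes "vis_connected V (init_pos A B)"
  shows "cmod (B - A) \<le> V"
proof (rule ccontr)
  assume nl: "\<not> cmod (B - A) \<le> V"
  let ?R = "\<lambda>x y. x \<in> robots \<and> y \<in> robots \<and> cmod (init_pos A B x - init_pos A B y) \<le> V"
  have r: "?R\<^sup>*\<^sup>* 0 1" using assms unfolding vis_connected_def robots_def by auto
  have c2: "cmod (B - (2 * A - B)) = 2 * cmod (B - A)"
  proof -
    have e: "B - (2 * A - B) = 2 * (B - A)" by (simp add: algebra_simps)
    have "cmod (2 * (B - A)) = 2 * cmod (B - A)" by (simp only: norm_mult) simp
    then show ?thesis by (simp only: e)
  qed
  have "?R\<^sup>*\<^sup>* 0 j \<Longrightarrow> j = 0" for j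
  proof (induction rule: rtranclp_induct)
    case base then show ?case by simp
  next
    case (step y z)
    have nl2: "\<not> 2 * cmod (B - A) \<le> V" using nl norm_ge_zero[of "B - A"] by linarith
    show ?case using step nl2 nl c2
      by (auto simp: robots_def init_pos_def)
  qed
  from this[OF r] show False by simp
qed

theorem lemma5:
  shows "EqOsc_solvable_FCOM_FSYNCH_LV"
  unfolding EqOsc_solvable_FCOM_FSYNCH_LV_def
proof (intro exI conjI allI impI)
  show "finite {0::nat, 1, 2, 3, 4}" by simp
  show "(0::nat) \<in> {0, 1, 2, 3, 4}" by simp
  show "snd (myalg p M) \<in> {0, 1, 2, 3, 4}" for p M unfolding myalg_def Let_def by auto
  fix A B :: complex and V :: real and F :: "nat \<Rightarrow> frame"
  assume a: "B \<noteq> A \<and> 0 < V \<and> (\<forall>i\<in>robots. frame_ok (F i)) \<and> vis_connected V (init_pos A B)"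
  then have ok: "\<forall>i\<in>robots. frame_ok (F i)" and BA: "B \<noteq> A" and dV: "cmod (B - A) \<le> V"
    using dist_le by auto
  let ?P = "\<lambda>t. fst (exec F V myalg (init_pos A B, \<lambda>_. 0) t)"
  have I: "\<And>t j. j \<in> robots \<Longrightarrow> ?P t j = pos A B (S t) j"
    using inv[OF ok BA dV] by blast
  have r: "0 \<in> robots" "1 \<in> robots" "2 \<in> robots" by (auto simp: robots_def)
  have P0: "?P t 0 = A + of_real (S t) * (B - A)" for t using I[OF r(1)] by (simp add: pos_def)
  have P1: "?P t 1 = A" for t using I[OF r(2)] by (simp add: pos_def)
  have P2: "?P t 2 = A + of_real (S t) * (A - B)" for t using I[OF r(3)] by (simp add: pos_def)
  have even: "S (2 * t + 2) = 2/3" for t by (simp add: S_def)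
  have odd: "S (2 * t + 1) = 1" for t by (simp add: S_def)
  show "EqOsc A B ?P"
    unfolding EqOsc_def Let_def
  proof (intro conjI allI impI)
    fix t
    show "?P t 1 = A" by (rule P1)
    show "cmod (?P t 0 - ?P t 1) = cmod (?P t 2 - ?P t 1)"
      unfolding P0 P1 P2 by (simp add: norm_mult norm_minus_commute)
    show "\<exists>t'>t. ?P t' 0 = A + 2 / 3 * (B - A) \<and> ?P t' 2 = A + 2 / 3 * (2 * A - B - A)"
      by (rule exI[of _ "2 * t + 2"]) (unfold P0 P2 even, simp add: algebra_simps)
    show "\<exists>t''>t. ?P t'' 0 = B \<and> ?P t'' 2 = 2 * A - B"
      by (rule exI[of _ "2 * t + 1"]) (unfold P0 P2 odd, simp add: algebra_simps)
  qed
qed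

end
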